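(* Let $X$ be a finite set, $k$ an integer with $1\le k\le|X|-1$, $\mathfrak{C}$ a family of choice functions for $\binom{X}{k}$ and $\mathcal{F}$ the set of (not necessarily simple) averaging functions for $\mathfrak{C}$. Assume $r=r(\mathcal{F})$ satisfies $4\le r<\infty$. Then (1) for every $f\in\mathcal{F}_{[r]}$ there is $\ell(f)\in\{1,\dots,r\}$ such that for every $Y\in\binom{X}{k}$ and every $\bar a\in Y^r$ which is not one-to-one, $f_Y(\bar a)=a_{\ell(f)}$; and (2) $r\le k$.
   Context: $\binom{X}{k}=\{Y\subseteq X:|Y|=k\}$; choice functions satisfy $c(Y)\in Y$. $\mathcal{F}_{[r]}$ is the set of families $f=\langle f_Y:Y\in\binom{X}{k}\rangle$ with $f_Y:Y^r\to Y$, $f_Y(x_1,\dots,x_r)\in\{x_1,\dots,x_r\}$, such that for all $c_1,\dots,c_r\in\mathfrak{C}$, $Y\mapsto f_Y(c_1(Y),\dots,c_r(Y))$ is in $\mathfrak{C}$; $\mathcal{F}=\bigcup_r\mathcal{F}_{[r]}$. $f\in\mathcal{F}_{[r]}$ is a monarchy if for some $t$, $f_Y(\bar x)=x_t$ for all $Y$ and $\bar x\in Y^r$. $r(\mathcal{F})=\min\{r\ge2:\text{some } f\in\mathcal{F}_{[r]}\text{ is not a monarchy}\}$. Standing assumption: every simple $f\in\mathcal{F}$ (with $f_Y$ the restriction of a single function independent of $Y$) is a monarchy. *)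

theory Defs
  imports "HOL-Library.FuncSet"
begin

definition ksubsets :: "'a set \<Rightarrow> nat \<Rightarrow> 'a set set" where
  "ksubsets X k = {Y. Y \<subseteq> X \<and> card Y = k}"

definition choice_fun :: "'a set \<Rightarrow> nat \<Rightarrow> ('a set \<Rightarrow> 'a) \<Rightarrow> bool" where
  "choice_fun X k c \<longleftrightarrow> (\<forall>Y\<in>ksubsets X k. c Y \<in> Y) \<and> c \<in> extensional (ksubsets X k)"

definition tuples :: "'a set \<Rightarrow> nat \<Rightarrow> 'a list set" where
  "tuples Y r = {xs. length xs = r \<and> set xs \<subseteq> Y}"

definition compose_fam :: "'a set \<Rightarrow> nat \<Rightarrow> ('a set \<Rightarrow> 'a list \<Rightarrow> 'a) \<Rightarrow> ('a set \<Rightarrow> 'a) list \<Rightarrow> 'a set \<Rightarrow> 'a" where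
  "compose_fam X k f cs = (\<lambda>Y. if Y \<in> ksubsets X k then f Y (map (\<lambda>c. c Y) cs) else undefined)"

definition avg :: "'a set \<Rightarrow> nat \<Rightarrow> ('a set \<Rightarrow> 'a) set \<Rightarrow> nat \<Rightarrow> ('a set \<Rightarrow> 'a list \<Rightarrow> 'a) set" where
  "avg X k CC r = {f.
     (\<forall>Y\<in>ksubsets X k. \<forall>xs\<in>tuples Y r. f Y xs \<in> set xs) \<and>
     (\<forall>cs. length cs = r \<and> set cs \<subseteq> CC \<longrightarrow> compose_fam X k f cs \<in> CC)}"

definition monarchy :: "'a set \<Rightarrow> nat \<Rightarrow> nat \<Rightarrow> ('a set \<Rightarrow> 'a list \<Rightarrow> 'a) \<Rightarrow> bool" where
  "monarchy X k r f \<longleftrightarrow> (\<exists>t<r. \<forall>Y\<in>ksubsets X k. \<forall>xs\<in>tuples Y r. f Y xs = xs ! t)"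

definition simple :: "'a set \<Rightarrow> nat \<Rightarrow> nat \<Rightarrow> ('a set \<Rightarrow> 'a list \<Rightarrow> 'a) \<Rightarrow> bool" where
  "simple X k r f \<longleftrightarrow> (\<exists>g. \<forall>Y\<in>ksubsets X k. \<forall>xs\<in>tuples Y r. f Y xs = g xs)"

definition rF :: "'a set \<Rightarrow> nat \<Rightarrow> ('a set \<Rightarrow> 'a) set \<Rightarrow> nat" where
  "rF X k CC = (LEAST r. 2 \<le> r \<and> (\<exists>f\<in>avg X k CC r. \<not> monarchy X k r f))"

end

theory Submission
  imports Defs
begin

lemma ident:
  assumes f: "f \<in> avg X k CC r"
    and mon: "\<forall>g\<in>avg X k CC (r - 1). monarchy X k (r - 1) g"
    and ij: "i < j" "j < r"
  shows "\<exists>m<r. \<forall>Y\<in>ksubsets X k. \<forall>xs\<in>tuples Y r. xs ! i = xs ! j \<longrightarrow> f Y xs = xs ! m"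
proof -
  define \<sigma> where "\<sigma> p = (if p = j then i else if p < j then p else p - 1)" for p :: nat
  have \<sigma>lt: "\<sigma> p < r - 1" if "p < r" for p using that ij unfolding \<sigma>_def by auto
  define g where "g Y ys = f Y (map (\<lambda>p. ys ! \<sigma> p) [0..<r])" for Y and ys :: "'a list"
  have exp_t: "map (\<lambda>p. ys ! \<sigma> p) [0..<r] \<in> tuples Y r" if "ys \<in> tuples Y (r - 1)" for Y ys
    using that \<sigma>lt unfolding tuples_def by (auto simp: subset_iff)
  have exp_s: "set (map (\<lambda>p. ys ! \<sigma> p) [0..<r]) \<subseteq> set ys" if "length ys = r - 1" for ys :: "'b list"
    using that \<sigma>lt by auto
  have gavg: "g \<in> avg X k CC (r - 1)"
    unfolding avg_def
  proof (intro CollectI conjI ballI allI impI)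
    fix Y ys assume Y: "Y \<in> ksubsets X k" and ys: "ys \<in> tuples Y (r - 1)"
    have "f Y (map (\<lambda>p. ys ! \<sigma> p) [0..<r]) \<in> set (map (\<lambda>p. ys ! \<sigma> p) [0..<r])"
      using f Y exp_t[OF ys] unfolding avg_def by blast
    also have "\<dots> \<subseteq> set ys" using exp_s ys unfolding tuples_def by blast
    finally show "g Y ys \<in> set ys" unfolding g_def .
  next
    fix cs :: "('a set \<Rightarrow> 'a) list" assume cs: "length cs = r - 1 \<and> set cs \<subseteq> CC"
    define cs' where "cs' = map (\<lambda>p. cs ! \<sigma> p) [0..<r]"
    have "length cs' = r \<and> set cs' \<subseteq> CC" using cs exp_s[of cs] unfolding cs'_def by auto
    hence "compose_fam X k f cs' \<in> CC" using f unfolding avg_def by blast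
    moreover have "map (\<lambda>c. c Y) cs' = map (\<lambda>p. map (\<lambda>c. c Y) cs ! \<sigma> p) [0..<r]" for Y
      using cs \<sigma>lt unfolding cs'_def by auto
    hence "compose_fam X k g cs = compose_fam X k f cs'"
      unfolding compose_fam_def g_def by (intro ext) simp
    ultimately show "compose_fam X k g cs \<in> CC" by simp
  qed
  then obtain t where t: "t < r - 1"
    and gt: "\<forall>Y\<in>ksubsets X k. \<forall>ys\<in>tuples Y (r - 1). g Y ys = ys ! t"
    using mon unfolding monarchy_def by blast
  define \<tau> where "\<tau> q = (if q < j then q else Suc q)" for q :: nat
  have \<tau>lt: "\<tau> q < r" if "q < r - 1" for q using that ij unfolding \<tau>_def by auto
  show ?thesis
  proof (intro exI[of _ "\<tau> t"] conjI ballI impI)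
    show "\<tau> t < r" using \<tau>lt t .
    fix Y xs assume Y: "Y \<in> ksubsets X k" and xs: "xs \<in> tuples Y r" and eq: "xs ! i = xs ! j"
    define ys where "ys = map (\<lambda>q. xs ! \<tau> q) [0..<r - 1]"
    have ys: "ys \<in> tuples Y (r - 1)" using xs \<tau>lt unfolding ys_def tuples_def
      by (auto simp: subset_iff)
    have "map (\<lambda>p. ys ! \<sigma> p) [0..<r] = xs"
    proof (rule nth_equalityI)
      show "length (map (\<lambda>p. ys ! \<sigma> p) [0..<r]) = length xs" using xs unfolding tuples_def by simp
      fix p assume "p < length (map (\<lambda>p. ys ! \<sigma> p) [0..<r])"
      hence p: "p < r" by simp
      have "map (\<lambda>p. ys ! \<sigma> p) [0..<r] ! p = xs ! \<tau> (\<sigma> p)"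
        using p \<sigma>lt[OF p] unfolding ys_def by simp
      also have "\<dots> = xs ! p" using eq ij unfolding \<tau>_def \<sigma>_def by auto
      finally show "map (\<lambda>p. ys ! \<sigma> p) [0..<r] ! p = xs ! p" .
    qed
    hence "f Y xs = g Y ys" unfolding g_def by simp
    also have "\<dots> = ys ! t" using gt Y ys by blast
    also have "\<dots> = xs ! \<tau> t" unfolding ys_def using t by simp
    finally show "f Y xs = xs ! \<tau> t" .
  qed
qed

lemma comb:
  fixes M :: "nat \<Rightarrow> nat \<Rightarrow> nat"
  assumes r4: "4 \<le> r"
    and Mlt: "\<forall>i j. i<r \<longrightarrow> j<r \<longrightarrow> i\<noteq>j \<longrightarrow> M i j < r"
    and K: "\<forall>i j p q S. i<r \<longrightarrow> j<r \<longrightarrow> i\<noteq>j \<longrightarrow> p<r \<longrightarrow> q<r \<longrightarrow> p\<noteq>q \<longrightarrow>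
       (i\<in>S \<longleftrightarrow> j\<in>S) \<longrightarrow> (p\<in>S \<longleftrightarrow> q\<in>S) \<longrightarrow> (M i j \<in> S \<longleftrightarrow> M p q \<in> S)"
  shows "\<exists>l<r. \<forall>i j. i<r \<longrightarrow> j<r \<longrightarrow> i\<noteq>j \<longrightarrow> (M i j = l \<or> (M i j \<in> {i,j} \<and> l \<in> {i,j}))"
proof -
  have C: "M p q = M i j" if "i<r" "j<r" "i\<noteq>j" "p<r" "q<r" "p\<noteq>q"
    "M i j \<notin> {i,j}" "M i j \<notin> {p,q}" for i j p q
    using K[rule_format, OF that(1-6), of "{M i j}"] that(7,8) by auto
  have "\<exists>i j. i<r \<and> j<r \<and> i\<noteq>j \<and> M i j \<notin> {i,j}"
  proof (rule ccontr)
    assume nn: "\<not> ?thesis"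
    have all: "M i j \<in> {i,j}" if "i<r" "j<r" "i\<noteq>j" for i j using nn that by blast
    have "M 0 1 \<in> {0,1}" "M 2 3 \<in> {2,3}" using all r4 by auto
    moreover have "M 0 1 \<in> {0,1::nat} \<longleftrightarrow> M 2 3 \<in> {0,1::nat}"
      using K[rule_format, of 0 1 2 3 "{0,1}"] r4 by auto
    ultimately show False by auto
  qed
  then obtain i j where ij: "i<r" "j<r" "i\<noteq>j" "M i j \<notin> {i,j}" by blast
  define l where "l = M i j"
  show ?thesis
  proof (intro exI[of _ l] conjI allI impI)
    show "l < r" using Mlt ij unfolding l_def by blast
    fix p q assume pq: "p<r" "q<r" "p\<noteq>q"
    show "M p q = l \<or> (M p q \<in> {p,q} \<and> l \<in> {p,q})"
    proof (cases "l \<in> {p,q}")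
      case False then show ?thesis using C[OF ij(1-3) pq] ij(4) unfolding l_def by auto
    next
      case True
      show ?thesis
      proof (rule ccontr)
        assume "\<not> ?thesis"
        hence tn: "M p q \<notin> {p,q}" using True by auto
        define t where "t = M p q"
        have lt: "l \<noteq> t" using True tn unfolding t_def by auto
        obtain u v where uv: "u<r" "v<r" "u\<noteq>v" "u \<notin> {l,t}" "v \<notin> {l,t}"
        proof -
          have "card ({0..<4::nat} - {l,t}) \<ge> 2"
          proof -
            have "card ({0..<4::nat} - {l,t}) \<ge> card {0..<4::nat} - card {l,t}"
              by (rule diff_card_le_card_Diff) auto
            moreover have "card {l,t} \<le> 2" by (simp add: card_insert_if)
            ultimately show ?thesis by simp
          qed
          then obtain u v where "u \<in> {0..<4::nat} - {l,t}" "v \<in> {0..<4::nat} - {l,t}" "u \<noteq> v"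
            by (metis One_nat_def Suc_1 card_le_Suc0_iff_eq not_less_eq_eq finite_Diff finite_atLeastLessThan)
          thus ?thesis using that[of u v] r4 by auto
        qed
        have "M u v = l" using C[OF ij(1-3) uv(1-3)] ij(4) uv(4,5) unfolding l_def by auto
        moreover have "M u v = t" using C[OF pq uv(1-3)] tn uv(4,5) unfolding t_def by auto
        ultimately show False using lt by simp
      qed
    qed
  qed
qed


theorem claim16p2:
  fixes X :: "'a set" and k r :: nat and CC :: "('a set \<Rightarrow> 'a) set"
  assumes "finite X"
    and "1 \<le> k" and "k \<le> card X - 1"
    and "\<forall>c\<in>CC. choice_fun X k c"
    and "\<forall>r' f. f \<in> avg X k CC r' \<and> simple X k r' f \<longrightarrow> monarchy X k r' f"
    and "\<exists>r'. 2 \<le> r' \<and> (\<exists>f\<in>avg X k CC r'. \<not> monarchy X k r' f)"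
    and "r = rF X k CC"
    and "4 \<le> r"
  shows "(\<forall>f\<in>avg X k CC r. \<exists>l<r. \<forall>Y\<in>ksubsets X k. \<forall>xs\<in>tuples Y r.
            \<not> distinct xs \<longrightarrow> f Y xs = xs ! l) \<and> r \<le> k"
proof -
  let ?P = "\<lambda>r'. 2 \<le> r' \<and> (\<exists>f\<in>avg X k CC r'. \<not> monarchy X k r' f)"
  have Pr: "?P r" using LeastI_ex[of ?P] assms(6,7) unfolding rF_def by blast
  have "\<not> ?P (r - 1)" using not_less_Least[of "r - 1" ?P] assms(7,8) unfolding rF_def by linarith
  hence mon: "\<forall>g\<in>avg X k CC (r - 1). monarchy X k (r - 1) g" using assms(8) by auto
  have part1: "\<exists>l<r. \<forall>Y\<in>ksubsets X k. \<forall>xs\<in>tuples Y r. \<not> distinct xs \<longrightarrow> f Y xs = xs ! l"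
    if f: "f \<in> avg X k CC r" for f
  proof -
    have Hpair: "\<exists>m<r. \<forall>Y\<in>ksubsets X k. \<forall>xs\<in>tuples Y r. xs ! i = xs ! j \<longrightarrow> f Y xs = xs ! m"
      if "i<r" "j<r" "i\<noteq>j" for i j
    proof (cases "i < j")
      case True then show ?thesis using ident[OF f mon True that(2)] by blast
    next
      case False
      hence "j < i" using that by auto
      then show ?thesis using ident[OF f mon _ that(1)] by metis
    qed
    obtain M where M: "\<And>i j. i<r \<Longrightarrow> j<r \<Longrightarrow> i\<noteq>j \<Longrightarrow> M i j < r \<and>
        (\<forall>Y\<in>ksubsets X k. \<forall>xs\<in>tuples Y r. xs ! i = xs ! j \<longrightarrow> f Y xs = xs ! M i j)"
      using Hpair by metis
    show ?thesis
    proof (cases "\<exists>Y\<in>ksubsets X k. \<exists>a\<in>Y. \<exists>b\<in>Y. a \<noteq> b")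
      case True
      then obtain Y a b where Y: "Y \<in> ksubsets X k" and ab: "a \<in> Y" "b \<in> Y" "a \<noteq> b" by blast
      define col where "col S = map (\<lambda>p. if p \<in> S then b else a) [0..<r]" for S :: "nat set"
      have colt: "col S \<in> tuples Y r" for S using ab unfolding col_def tuples_def by auto
      have K: "\<forall>i j p q S. i<r \<longrightarrow> j<r \<longrightarrow> i\<noteq>j \<longrightarrow> p<r \<longrightarrow> q<r \<longrightarrow> p\<noteq>q \<longrightarrow>
       (i\<in>S \<longleftrightarrow> j\<in>S) \<longrightarrow> (p\<in>S \<longleftrightarrow> q\<in>S) \<longrightarrow> (M i j \<in> S \<longleftrightarrow> M p q \<in> S)"
      proof (intro allI impI)
        fix i j p q S assume h: "i<r" "j<r" "i\<noteq>j" "p<r" "q<r" "p\<noteq>q"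
          "(i\<in>S \<longleftrightarrow> j\<in>S)" "(p\<in>S \<longleftrightarrow> q\<in>S)"
        have "f Y (col S) = col S ! M i j"
          using M[OF h(1-3)] Y colt h(1,2,7) unfolding col_def by auto
        moreover have "f Y (col S) = col S ! M p q"
          using M[OF h(4-6)] Y colt h(4,5,8) unfolding col_def by auto
        ultimately have "col S ! M i j = col S ! M p q" by simp
        thus "M i j \<in> S \<longleftrightarrow> M p q \<in> S"
          using M[OF h(1-3)] M[OF h(4-6)] ab(3) unfolding col_def by (auto split: if_splits)
      qed
      obtain l where l: "l < r" and
        lM: "\<forall>i j. i<r \<longrightarrow> j<r \<longrightarrow> i\<noteq>j \<longrightarrow> (M i j = l \<or> (M i j \<in> {i,j} \<and> l \<in> {i,j}))"
        using comb[OF assms(8) _ K] M by blast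
      show ?thesis
      proof (intro exI[of _ l] conjI ballI impI l)
        fix Z xs assume Z: "Z \<in> ksubsets X k" and xs: "xs \<in> tuples Z r" and nd: "\<not> distinct xs"
        obtain i j where ij: "i < r" "j < r" "i \<noteq> j" "xs ! i = xs ! j"
          using nd xs unfolding distinct_conv_nth tuples_def by auto
        have "f Z xs = xs ! M i j" using M[OF ij(1-3)] Z xs ij(4) by blast
        also have "\<dots> = xs ! l"
        proof -
          have "M i j = l \<or> (M i j \<in> {i,j} \<and> l \<in> {i,j})" using lM ij by blast
          thus ?thesis using ij(4) by auto
        qed
        finally show "f Z xs = xs ! l" .
      qed
    next
      case False
      show ?thesis
      proof (intro exI[of _ 0] conjI ballI impI)
        show "0 < r" using assms(8) by simp
        fix Z xs assume Z: "Z \<in> ksubsets X k" and xs: "xs \<in> tuples Z r"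
        have "f Z xs \<in> set xs" using f Z xs unfolding avg_def by blast
        moreover have "xs ! 0 \<in> set xs" using xs assms(8) unfolding tuples_def by auto
        ultimately show "f Z xs = xs ! 0" using False Z xs unfolding tuples_def by blast
      qed
    qed
  qed
  have "r \<le> k"
  proof (rule ccontr)
    assume "\<not> r \<le> k"
    obtain f where f: "f \<in> avg X k CC r" and nm: "\<not> monarchy X k r f" using Pr by blast
    obtain l where l: "l < r" "\<forall>Y\<in>ksubsets X k. \<forall>xs\<in>tuples Y r. \<not> distinct xs \<longrightarrow> f Y xs = xs ! l"
      using part1[OF f] by blast
    have "\<not> distinct xs" if Y: "Y \<in> ksubsets X k" and xs: "xs \<in> tuples Y r" for Y xs
    proof
      assume d: "distinct xs"
      have fin: "finite Y" using Y assms(1) unfolding ksubsets_def by (auto intro: finite_subset)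
      have "card (set xs) \<le> card Y" using xs fin unfolding tuples_def by (auto intro: card_mono)
      moreover have "card (set xs) = r" using d xs distinct_card unfolding tuples_def by auto
      ultimately show False using Y \<open>\<not> r \<le> k\<close> unfolding ksubsets_def by auto
    qed
    hence "monarchy X k r f" using l unfolding monarchy_def by blast
    thus False using nm by simp
  qed
  thus ?thesis using part1 by blast
qed

end
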